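(* (i) If $(\mathbf A,\mathbf b)\in\mathbb C^{m\times(d+1)}$ is affine phase retrievable for $\mathbb C^d$, then $m\ge 3d$. (ii) Let $B=(\mathbf a_1,\ldots,\mathbf a_d)\in\mathbb C^{d\times d}$ be nonsingular and set $\mathbf A=(B,B,B)^\top\in\mathbb C^{3d\times d}$. Let $\mathbf b=(b_{11},\ldots,b_{d1},b_{12},\ldots,b_{d2},b_{13},\ldots,b_{d3})^\top\in\mathbb C^{3d}$ be such that for each $1\le j\le d$ the points $b_{j1},b_{j2},b_{j3}$ are not collinear in $\mathbb C$. Then $(\mathbf A,\mathbf b)$ is affine phase retrievable for $\mathbb C^d$.
   Context: For $\mathbf u,\mathbf v\in\mathbb C^d$, $\langle\mathbf u,\mathbf v\rangle=\sum_i\overline{u_i}v_i$. A pair $(\mathbf A,\mathbf b)$ with $\mathbf A=(\mathbf a_1,\ldots,\mathbf a_m)^\top\in\mathbb C^{m\times d}$ and $\mathbf b=(b_1,\ldots,b_m)^\top\in\mathbb C^m$ (viewed as a matrix in $\mathbb C^{m\times(d+1)}$) is called affine phase retrievable for $\mathbb C^d$ if the map $\mathbf x\mapsto(|\langle\mathbf a_1,\mathbf x\rangle+b_1|,\ldots,|\langle\mathbf a_m,\mathbf x\rangle+b_m|)$ is injective on $\mathbb C^d$. *)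

theory Defs
  imports "HOL-Analysis.Analysis" "Jordan_Normal_Form.Determinant"
begin

definition row_cinner :: "complex mat \<Rightarrow> nat \<Rightarrow> complex Matrix.vec \<Rightarrow> complex" where
  "row_cinner A k x = (\<Sum>i<dim_col A. cnj (A $$ (k, i)) * x $ i)"

definition affine_phase_retrievable :: "complex mat \<Rightarrow> complex Matrix.vec \<Rightarrow> bool" where
  "affine_phase_retrievable A b \<longleftrightarrow>
     inj_on (\<lambda>x. vec (dim_row A) (\<lambda>k. cmod (row_cinner A k x + b $ k))) (carrier_vec (dim_col A))"

end

theory Submission imports Defs begin
lemma re_zero_par:
  fixes w e :: complex
  assumes "w \<noteq> 0" "Re (w * cnj e) = 0"
  shows "e = Im (e / w) *\<^sub>R (\<i> * w)"
proof -
  have "Re (e / w) = Re (e * cnj w) / (cmod w)^2"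
    by (simp add: Re_divide cmod_power2 add_divide_distrib)
  also have "Re (e * cnj w) = Re (w * cnj e)"
    by (simp add: algebra_simps)
  finally have "Re (e / w) = 0" using assms by simp
  hence "e / w = \<i> * complex_of_real (Im (e / w))" by (simp add: complex_eq_iff)
  hence "e = (\<i> * complex_of_real (Im (e / w))) * w" using assms by (simp add: divide_eq_eq)
  thus ?thesis by (simp add: scaleR_conv_of_real algebra_simps)
qed

lemma cmod_sq_add: "(cmod (z + c))^2 = (cmod z)^2 + 2 * Re (z * cnj c) + (cmod c)^2"
  unfolding cmod_power2 by (simp add: power2_eq_square algebra_simps)

lemma three_points:
  fixes z z' c1 c2 c3 :: complex
  assumes "cmod (z + c1) = cmod (z' + c1)" "cmod (z + c2) = cmod (z' + c2)"
    "cmod (z + c3) = cmod (z' + c3)" "\<not> collinear {c1, c2, c3}"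
  shows "z = z'"
proof (rule ccontr)
  assume ne: "z \<noteq> z'"
  define w where "w = z - z'"
  have w0: "w \<noteq> 0" using ne w_def by simp
  define K where "K = ((cmod z')^2 - (cmod z)^2) / 2"
  have key: "Re (w * cnj c) = K" if "cmod (z + c) = cmod (z' + c)" for c
  proof -
    have "(cmod (z + c))^2 = (cmod (z' + c))^2" using that by simp
    hence "(cmod z)^2 + 2 * Re (z * cnj c) = (cmod z')^2 + 2 * Re (z' * cnj c)"
      unfolding cmod_sq_add by simp
    thus ?thesis unfolding w_def K_def by (simp add: algebra_simps)
  qed
  have "\<forall>x\<in>{c1,c2,c3}. Re (w * cnj x) = K" using key assms by auto
  hence "\<forall>x\<in>{c1,c2,c3}. \<forall>y\<in>{c1,c2,c3}. \<exists>t. x - y = t *\<^sub>R (\<i> * w)"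
  proof (intro ballI)
    fix x y assume h: "\<forall>x\<in>{c1,c2,c3}. Re (w * cnj x) = K" "x \<in> {c1,c2,c3}" "y \<in> {c1,c2,c3}"
    have "Re (w * cnj x) = K" "Re (w * cnj y) = K" using h by blast+
    hence "Re (w * cnj (x - y)) = 0" by (simp add: algebra_simps)
    from re_zero_par[OF w0 this] show "\<exists>t. x - y = t *\<^sub>R (\<i> * w)" by blast
  qed
  hence "collinear {c1,c2,c3}" unfolding collinear_def by blast
  thus False using assms by simp
qed
lemma few_eqs:
  fixes f :: "nat \<Rightarrow> 'a::field Matrix.vec"
  assumes T: "finite T" "card T < k" and fT: "\<forall>t\<in>T. f t \<in> carrier_vec k"
  shows "\<exists>v\<in>carrier_vec k. v \<noteq> 0\<^sub>v k \<and> (\<forall>t\<in>T. f t \<bullet> v = 0)"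
proof -
  define ts where "ts = sorted_list_of_set T"
  define n where "n = card T"
  have lts: "length ts = n" "set ts = T" using T unfolding ts_def n_def by auto
  define c where "c = (\<lambda>i. if i < n then f (ts ! i) else 0\<^sub>v k)"
  define M where "M = mat\<^sub>r k k (\<lambda>i. if i = k - 1 then 0\<^sub>v k else c i)"
  have k: "k - 1 < k" using T by simp
  have c: "c \<in> {0..<k} \<rightarrow> carrier_vec k" using fT lts unfolding c_def by (auto intro!: nth_mem)
  have "det M = 0" unfolding M_def by (rule det_row_0[OF k c])
  moreover have Mc: "M \<in> carrier_mat k k" unfolding M_def by simp
  ultimately obtain v where v: "v \<in> carrier_vec k" "v \<noteq> 0\<^sub>v k" "M *\<^sub>v v = 0\<^sub>v k"
    using det_0_iff_vec_prod_zero_field by blast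
  have "\<forall>t\<in>T. f t \<bullet> v = 0"
  proof
    fix t assume t: "t \<in> T"
    then obtain i where i: "i < n" "ts ! i = t" using lts by (metis in_set_conv_nth)
    have ik: "i < k" "i \<noteq> k - 1" using i T n_def by auto
    have ft: "f t \<in> carrier_vec k" using fT t by auto
    have "row M i = f t" unfolding M_def using ik i ft by (simp add: c_def)
    hence "(M *\<^sub>v v) $ i = f t \<bullet> v" using ik Mc by simp
    thus "f t \<bullet> v = 0" using v ik by simp
  qed
  thus ?thesis using v by blast
qed
lemma row_select:
  fixes f :: "nat \<Rightarrow> 'a::field Matrix.vec" and c :: "nat \<Rightarrow> 'a"
  assumes f: "\<forall>k. f k \<in> carrier_vec d"
  shows "\<exists>S p. S \<subseteq> {..<m} \<and> p \<in> carrier_vec d \<and> (\<forall>k\<in>S. f k \<bullet> p = c k)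
     \<and> (\<forall>u\<in>carrier_vec d. (\<forall>k\<in>S. f k \<bullet> u = 0) \<longrightarrow> (\<forall>k<m. f k \<bullet> u = 0))"
proof (induction m)
  case 0
  show ?case by (rule exI[of _ "{}"], rule exI[of _ "0\<^sub>v d"], auto)
next
  case (Suc m)
  then obtain S p where S: "S \<subseteq> {..<m}" "p \<in> carrier_vec d" "\<forall>k\<in>S. f k \<bullet> p = c k"
    "\<forall>u\<in>carrier_vec d. (\<forall>k\<in>S. f k \<bullet> u = 0) \<longrightarrow> (\<forall>k<m. f k \<bullet> u = 0)" by blast
  show ?case
  proof (cases "\<forall>u\<in>carrier_vec d. (\<forall>k\<in>S. f k \<bullet> u = 0) \<longrightarrow> f m \<bullet> u = 0")
    case True
    show ?thesis
      apply (rule exI[of _ S], rule exI[of _ p])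
      using S True by (auto simp: less_Suc_eq)
  next
    case False
    then obtain u0 where u0: "u0 \<in> carrier_vec d" "\<forall>k\<in>S. f k \<bullet> u0 = 0" "f m \<bullet> u0 \<noteq> 0" by blast
    define t where "t = (c m - f m \<bullet> p) / (f m \<bullet> u0)"
    define p' where "p' = p + t \<cdot>\<^sub>v u0"
    have lin: "f k \<bullet> p' = f k \<bullet> p + t * (f k \<bullet> u0)" for k
      unfolding p'_def using f u0(1) S(2)
      by (simp add: scalar_prod_add_distrib[of _ d] scalar_prod_smult_distrib[of _ d])
    show ?thesis
      apply (rule exI[of _ "insert m S"], rule exI[of _ p'])
      using S u0 lin f by (auto simp: less_Suc_eq p'_def t_def)
  qed
qed
lemma sum_split2: "(\<Sum>i\<in>{0..<2*(d::nat)}. h i) = (\<Sum>i\<in>{0..<d}. h i) + (\<Sum>i\<in>{0..<d}. h (d + i))"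
proof -
  have "{0..<2*d} = {0..<d} \<union> {d..<d+d}" by auto
  hence "(\<Sum>i\<in>{0..<2*d}. h i) = (\<Sum>i\<in>{0..<d}. h i) + (\<Sum>i\<in>{d..<d+d}. h i)"
    by (simp add: sum.union_disjoint)
  also have "(\<Sum>i\<in>{d..<d+d}. h i) = (\<Sum>i\<in>{0..<d}. h (d + i))"
    using sum.shift_bounds_nat_ivl[of h 0 d d] by (simp add: add.commute)
  finally show ?thesis .
qed

lemma real_enc:
  fixes fk :: "complex Matrix.vec" and z :: "real Matrix.vec" and cc :: complex
  assumes "fk \<in> carrier_vec d" "z \<in> carrier_vec (2*d)"
  shows "Re (cnj (fk \<bullet> vec d (\<lambda>i. Complex (z$i) (z$(d+i)))) * cc)
     = vec (2*d) (\<lambda>i. if i < d then Re (cnj (fk $ i) * cc) else Im (cnj (fk $ (i - d)) * cc)) \<bullet> z"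
proof -
  have "vec (2*d) (\<lambda>i. if i < d then Re (cnj (fk $ i) * cc) else Im (cnj (fk $ (i - d)) * cc)) \<bullet> z
    = (\<Sum>i\<in>{0..<2*d}. (if i < d then Re (cnj (fk $ i) * cc) else Im (cnj (fk $ (i - d)) * cc)) * z $ i)"
    using assms by (simp add: scalar_prod_def)
  also have "\<dots> = (\<Sum>i\<in>{0..<d}. Re (cnj (fk $ i) * cc) * z$i) + (\<Sum>i\<in>{0..<d}. Im (cnj (fk $ i) * cc) * z$(d+i))"
    by (simp add: sum_split2)
  also have "\<dots> = (\<Sum>i\<in>{0..<d}. Re (cnj (fk $ i) * cc) * z$i + Im (cnj (fk $ i) * cc) * z$(d+i))"
    by (simp add: sum.distrib)
  also have "\<dots> = (\<Sum>i\<in>{0..<d}. Re (cnj (fk $ i * Complex (z$i) (z$(d+i))) * cc))"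
    by (intro sum.cong refl) (simp add: algebra_simps)
  also have "\<dots> = Re (cnj (fk \<bullet> vec d (\<lambda>i. Complex (z$i) (z$(d+i)))) * cc)"
    by (simp add: scalar_prod_def sum_distrib_right Re_sum cnj_sum)
  finally show ?thesis by simp
qed

lemma cmod_pm:
  fixes c w :: complex
  assumes "Re (cnj w * c) = 0"
  shows "cmod (c + w) = cmod (c - w)"
proof -
  have r: "Re (c * cnj w) = 0" using assms by (simp add: mult.commute)
  have "(cmod (c + w))^2 = (cmod (c - w))^2"
    using cmod_sq_add[of c w] cmod_sq_add[of c "- w"] r by simp
  thus ?thesis by (simp add: power2_eq_iff_nonneg)
qed

lemma part_i:
  fixes A :: "complex mat" and b :: "complex Matrix.vec"
  assumes A: "A \<in> carrier_mat m d" and b: "b \<in> carrier_vec m"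
    and apr: "affine_phase_retrievable A b"
  shows "3 * d \<le> m"
proof (rule ccontr)
  assume "\<not> 3 * d \<le> m"
  hence lt: "m < 3 * d" by simp
  define f where "f k = vec d (\<lambda>i. cnj (A $$ (k,i)))" for k
  have fc: "\<forall>k. f k \<in> carrier_vec d" by (simp add: f_def)
  have rc: "row_cinner A k x = f k \<bullet> x" if "x \<in> carrier_vec d" for k x
    using that A unfolding row_cinner_def f_def scalar_prod_def
    by (auto simp: lessThan_atLeast0 intro!: sum.cong)
  define meas where "meas x = vec m (\<lambda>k. cmod (row_cinner A k x + b $ k))" for x
  have inj: "inj_on meas (carrier_vec d)"
    using apr A unfolding affine_phase_retrievable_def meas_def by simp
  have kerz: "u = 0\<^sub>v d" if u: "u \<in> carrier_vec d" "\<forall>k<m. f k \<bullet> u = 0" for u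
  proof -
    have "meas u = meas (0\<^sub>v d)" unfolding meas_def
      using u rc[of u] rc[of "0\<^sub>v d"] fc by (auto intro!: eq_vecI)
    thus ?thesis using inj u by (auto dest: inj_onD)
  qed
  obtain S p where S: "S \<subseteq> {..<m}" "p \<in> carrier_vec d" "\<forall>k\<in>S. f k \<bullet> p = - b $ k"
     "\<forall>u\<in>carrier_vec d. (\<forall>k\<in>S. f k \<bullet> u = 0) \<longrightarrow> (\<forall>k<m. f k \<bullet> u = 0)"
    using row_select[OF fc, of m "\<lambda>k. - b $ k"] by blast
  have finS: "finite S" using S(1) finite_subset by blast
  have cardS: "d \<le> card S"
  proof (rule ccontr)
    assume "\<not> d \<le> card S"
    then obtain v where v: "v \<in> carrier_vec d" "v \<noteq> 0\<^sub>v d" "\<forall>t\<in>S. f t \<bullet> v = 0"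
      using few_eqs[OF finS, of d f] fc by auto
    then show False using kerz S(4) by blast
  qed
  define T where "T = {..<m} - S"
  have finT: "finite T" by (simp add: T_def)
  have "card T = m - card S" unfolding T_def using S(1) finS by (simp add: card_Diff_subset)
  hence cardT: "card T < 2 * d" using cardS lt by linarith
  define cc where "cc k = f k \<bullet> p + b $ k" for k
  have ccS: "\<forall>k\<in>S. cc k = 0" using S(3) by (simp add: cc_def)
  define g where "g k = vec (2*d) (\<lambda>i. if i < d then Re (cnj (f k $ i) * cc k)
      else Im (cnj (f k $ (i - d)) * cc k))" for k
  obtain z where z: "z \<in> carrier_vec (2*d)" "z \<noteq> 0\<^sub>v (2*d)" "\<forall>t\<in>T. g t \<bullet> z = 0"
    using few_eqs[OF finT cardT, of g] by (auto simp: g_def)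
  define u where "u = vec d (\<lambda>i. Complex (z$i) (z$(d+i)))"
  have uc: "u \<in> carrier_vec d" by (simp add: u_def)
  have u0: "u \<noteq> 0\<^sub>v d"
  proof
    assume h: "u = 0\<^sub>v d"
    have zi: "z$i = 0 \<and> z$(d+i) = 0" if "i < d" for i
      using arg_cong[OF h, of "\<lambda>v. v $ i"] that by (simp add: u_def complex_eq_iff)
    have "z = 0\<^sub>v (2*d)"
    proof (rule eq_vecI)
      fix i assume "i < dim_vec (0\<^sub>v (2*d) :: real Matrix.vec)"
      hence i: "i < 2 * d" by simp
      show "z $ i = 0\<^sub>v (2*d) $ i"
      proof (cases "i < d")
        case True thus ?thesis using zi i by simp
      next
        case False
        hence "i = d + (i - d)" "i - d < d" using i by auto
        thus ?thesis using zi[of "i - d"] i by simp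
      qed
    qed (use z in simp)
    thus False using z by simp
  qed
  have orth: "Re (cnj (f k \<bullet> u) * cc k) = 0" if "k < m" for k
  proof (cases "k \<in> S")
    case True thus ?thesis using ccS by simp
  next
    case False
    hence "k \<in> T" using that by (simp add: T_def)
    thus ?thesis using real_enc[of "f k" d z "cc k"] fc z unfolding u_def g_def by simp
  qed
  define x where "x = p + u"
  define y where "y = p - u"
  have xc: "x \<in> carrier_vec d" "y \<in> carrier_vec d" using S(2) uc by (auto simp: x_def y_def)
  have "x \<noteq> y"
  proof
    assume h: "x = y"
    have "u = 0\<^sub>v d"
    proof (rule eq_vecI)
      fix i assume "i < dim_vec (0\<^sub>v d :: complex Matrix.vec)"
      hence i: "i < d" by simp
      have "p $ i + u $ i = p $ i - u $ i"
        using arg_cong[OF h, of "\<lambda>v. v $ i"] i uc S(2) by (simp add: x_def y_def)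
      thus "u $ i = 0\<^sub>v d $ i" using i by simp
    qed (use uc in simp)
    thus False using u0 by simp
  qed
  moreover have "meas x = meas y"
  proof (rule eq_vecI)
    fix k assume "k < dim_vec (meas y)"
    hence k: "k < m" by (simp add: meas_def)
    have ex: "row_cinner A k x + b $ k = cc k + f k \<bullet> u"
      using rc[OF xc(1)] fc S(2) uc unfolding x_def cc_def
      by (simp add: scalar_prod_add_distrib[of _ d])
    have ey: "row_cinner A k y + b $ k = cc k - f k \<bullet> u"
      using rc[OF xc(2)] fc S(2) uc unfolding y_def cc_def
      by (simp add: scalar_prod_minus_distrib[of _ d])
    show "meas x $ k = meas y $ k" using k ex ey cmod_pm[OF orth[OF k]]
      by (simp add: meas_def)
  qed (simp add: meas_def)
  ultimately show False using inj xc by (auto dest: inj_onD)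
qed

lemma part_ii:
  fixes B :: "complex mat" and b :: "complex Matrix.vec"
  assumes B: "B \<in> carrier_mat d d" and dB: "det B \<noteq> 0" and b: "b \<in> carrier_vec (3 * d)"
    and nc: "\<forall>j<d. \<not> collinear {b $ j, b $ (d + j), b $ (2 * d + j)}"
  shows "affine_phase_retrievable (mat (3 * d) d (\<lambda>(k, i). B $$ (i, k mod d))) b"
proof -
  define M where "M = mat (3 * d) d (\<lambda>(k, i). B $$ (i, k mod d))"
  define g where "g j x = (\<Sum>i<d. cnj (B $$ (i, j)) * x $ i)" for j and x :: "complex Matrix.vec"
  have rc: "row_cinner M k x = g (k mod d) x" if "k < 3 * d" for k x
    using that unfolding row_cinner_def M_def g_def by (auto intro!: sum.cong)
  have "inj_on (\<lambda>x. vec (3 * d) (\<lambda>k. cmod (row_cinner M k x + b $ k))) (carrier_vec d)"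
  proof (rule inj_onI)
    fix x y :: "complex Matrix.vec"
    assume x: "x \<in> carrier_vec d" and y: "y \<in> carrier_vec d"
      and h: "vec (3 * d) (\<lambda>k. cmod (row_cinner M k x + b $ k))
            = vec (3 * d) (\<lambda>k. cmod (row_cinner M k y + b $ k))"
    have hk: "cmod (g (k mod d) x + b $ k) = cmod (g (k mod d) y + b $ k)" if "k < 3 * d" for k
      using arg_cong[OF h, of "\<lambda>v. v $ k"] that rc[OF that] by simp
    have geq: "g j x = g j y" if j: "j < d" for j
    proof -
      have m1: "j mod d = j" "(d + j) mod d = j" "(2 * d + j) mod d = j" using j by auto
      have l: "j < 3 * d" "d + j < 3 * d" "2 * d + j < 3 * d" using j by auto
      show ?thesis
        using three_points[OF hk[OF l(1)] _ _ nc[rule_format, OF j]] hk[OF l(2)] hk[OF l(3)]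
        unfolding m1 by simp
    qed
    show "x = y"
    proof (rule ccontr)
      assume ne: "x \<noteq> y"
      define w where "w = vec d (\<lambda>i. cnj (x $ i - y $ i))"
      have wc: "w \<in> carrier_vec d" by (simp add: w_def)
      have w0: "w \<noteq> 0\<^sub>v d"
      proof
        assume hw: "w = 0\<^sub>v d"
        have "x = y"
        proof (rule eq_vecI)
          fix i assume "i < dim_vec y"
          hence i: "i < d" using y by simp
          show "x $ i = y $ i" using arg_cong[OF hw, of "\<lambda>v. v $ i"] i by (simp add: w_def)
        qed (use x y in simp)
        thus False using ne by simp
      qed
      have TB: "transpose_mat B \<in> carrier_mat d d" using B by simp
      have "transpose_mat B *\<^sub>v w = 0\<^sub>v d"
      proof (rule eq_vecI)
        fix j assume "j < dim_vec (0\<^sub>v d :: complex Matrix.vec)"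
        hence j: "j < d" by simp
        have "(transpose_mat B *\<^sub>v w) $ j = (\<Sum>i<d. B $$ (i, j) * cnj (x $ i - y $ i))"
          using j B unfolding w_def by (auto simp: scalar_prod_def col_def lessThan_atLeast0 intro!: sum.cong)
        also have "\<dots> = cnj (g j x - g j y)"
          unfolding g_def by (simp add: cnj_sum sum_subtractf[symmetric] algebra_simps)
        also have "\<dots> = 0" using geq[OF j] by simp
        finally show "(transpose_mat B *\<^sub>v w) $ j = 0\<^sub>v d $ j" using j by simp
      qed (use B in simp)
      hence "det (transpose_mat B) = 0" using det_0_iff_vec_prod_zero[OF TB] wc w0 by blast
      thus False using det_transpose[OF B] dB by simp
    qed
  qed
  thus ?thesis unfolding affine_phase_retrievable_def M_def[symmetric] by (simp add: M_def)
qed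

theorem theorem3p3:
  shows "(\<forall>(m::nat) (d::nat) (A::complex mat) (b::complex Matrix.vec).
            A \<in> carrier_mat m d \<longrightarrow> b \<in> carrier_vec m \<longrightarrow>
            affine_phase_retrievable A b \<longrightarrow> m \<ge> 3 * d)
       \<and> (\<forall>(d::nat) (B::complex mat) (b::complex Matrix.vec).
            B \<in> carrier_mat d d \<longrightarrow> det B \<noteq> 0 \<longrightarrow> b \<in> carrier_vec (3 * d) \<longrightarrow>
            (\<forall>j<d. \<not> collinear {b $ j, b $ (d + j), b $ (2 * d + j)}) \<longrightarrow>
            affine_phase_retrievable (mat (3 * d) d (\<lambda>(k, i). B $$ (i, k mod d))) b)"
  using part_i part_ii by blast

end
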